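(* Let $H$ be a connected finite loopless graph with a marked vertex $v_0$ and $L$ a connected finite graph with at least $\deg_H(v_0)$ vertices. Let $G$ be obtained from $H$ by deleting $v_0$, adding a disjoint copy of $L$, and attaching each edge of $H$ formerly incident to $v_0$ to a vertex of $L$, distinct edges to distinct vertices. If $L$ has two edge-disjoint spanning trees (i.e. $M(L)$ has two disjoint bases), then $f(M(G))\le f(M(H))$.
   Context: $M(K)$ denotes the graphic matroid of a graph $K$ (bases: edge sets of spanning trees for connected $K$). For a matroid $M$, the distance between bases $B,B'$ is $|B\triangle B'|$; the Borsuk number $f(M)$ is the minimum number of parts in a partition of the set of bases in which each part has diameter strictly smaller than the diameter of the set of all bases ($f(M)=+\infty$ if $M$ has exactly one basis). *)

theory Defs
  imports Main "HOL-Library.Extended_Nat"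
begin

text \<open>Finite multigraphs: vertex set V, edge set E, and an endpoint map
  ends :: 'e \<Rightarrow> 'v \<times> 'v (loops and parallel edges allowed).\<close>

definition wf_graph :: "'v set \<Rightarrow> 'e set \<Rightarrow> ('e \<Rightarrow> 'v \<times> 'v) \<Rightarrow> bool" where
  "wf_graph V E ends \<longleftrightarrow> finite V \<and> finite E \<and> (\<forall>e\<in>E. fst (ends e) \<in> V \<and> snd (ends e) \<in> V)"

definition loopless :: "'e set \<Rightarrow> ('e \<Rightarrow> 'v \<times> 'v) \<Rightarrow> bool" where
  "loopless E ends \<longleftrightarrow> (\<forall>e\<in>E. fst (ends e) \<noteq> snd (ends e))"

definition adj :: "'e set \<Rightarrow> ('e \<Rightarrow> 'v \<times> 'v) \<Rightarrow> ('v \<times> 'v) set" where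
  "adj F ends = {(u, w). \<exists>e\<in>F. ends e = (u, w) \<or> ends e = (w, u)}"

definition connected_on :: "'v set \<Rightarrow> 'e set \<Rightarrow> ('e \<Rightarrow> 'v \<times> 'v) \<Rightarrow> bool" where
  "connected_on V F ends \<longleftrightarrow> V \<noteq> {} \<and> (\<forall>u\<in>V. \<forall>w\<in>V. (u, w) \<in> (adj F ends)\<^sup>*)"

definition spanning_tree :: "'v set \<Rightarrow> 'e set \<Rightarrow> ('e \<Rightarrow> 'v \<times> 'v) \<Rightarrow> 'e set \<Rightarrow> bool" where
  "spanning_tree V E ends T \<longleftrightarrow> T \<subseteq> E \<and> connected_on V T ends \<and>
     (\<forall>e\<in>T. \<not> connected_on V (T - {e}) ends)"

definition graphic_bases :: "'v set \<Rightarrow> 'e set \<Rightarrow> ('e \<Rightarrow> 'v \<times> 'v) \<Rightarrow> 'e set set" where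
  "graphic_bases V E ends = {T. spanning_tree V E ends T}"

definition degree :: "'e set \<Rightarrow> ('e \<Rightarrow> 'v \<times> 'v) \<Rightarrow> 'v \<Rightarrow> nat" where
  "degree E ends v = card {e\<in>E. fst (ends e) = v} + card {e\<in>E. snd (ends e) = v}"

definition bdiam :: "'e set set \<Rightarrow> nat" where
  "bdiam S = Max {card ((B - B') \<union> (B' - B)) | B B'. B \<in> S \<and> B' \<in> S}"

definition is_partition :: "'a set set \<Rightarrow> 'a set \<Rightarrow> bool" where
  "is_partition P S \<longleftrightarrow> \<Union>P = S \<and> {} \<notin> P \<and> (\<forall>X\<in>P. \<forall>Y\<in>P. X \<noteq> Y \<longrightarrow> X \<inter> Y = {})"

definition borsuk :: "'e set set \<Rightarrow> enat" where
  "borsuk \<B> = (if card \<B> = 1 then \<infinity> else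
     enat (LEAST k. \<exists>P. is_partition P \<B> \<and> card P = k \<and> (\<forall>X\<in>P. bdiam X < bdiam \<B>)))"

text \<open>The graph G: delete v0 from H, add L, reattach each edge formerly incident
  to v0 to the vertex phi e of L.\<close>
definition glue_vertices :: "'v set \<Rightarrow> 'v \<Rightarrow> 'w set \<Rightarrow> ('v + 'w) set" where
  "glue_vertices VH v0 VL = Inl ` (VH - {v0}) \<union> Inr ` VL"

definition glue_edges :: "'e set \<Rightarrow> 'f set \<Rightarrow> ('e + 'f) set" where
  "glue_edges EH EL = Inl ` EH \<union> Inr ` EL"

definition glue_ends :: "('e \<Rightarrow> 'v \<times> 'v) \<Rightarrow> 'v \<Rightarrow> ('f \<Rightarrow> 'w \<times> 'w) \<Rightarrow> ('e \<Rightarrow> 'w)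
    \<Rightarrow> ('e + 'f) \<Rightarrow> ('v + 'w) \<times> ('v + 'w)" where
  "glue_ends endsH v0 endsL phi x = (case x of
      Inl e \<Rightarrow> (let r = (\<lambda>u. if u = v0 then Inr (phi e) else Inl u)
               in (r (fst (endsH e)), r (snd (endsH e))))
    | Inr f \<Rightarrow> (Inr (fst (endsL f)), Inr (snd (endsL f))))"

end

theory Submission
  imports Defs
begin


lemma adj_sym: "(x,y) \<in> adj F ends \<Longrightarrow> (y,x) \<in> adj F ends"
  by (auto simp: adj_def)

lemma rtr_sym: "(x,y) \<in> (adj F ends)\<^sup>* \<Longrightarrow> (y,x) \<in> (adj F ends)\<^sup>*"
proof -
  have "sym (adj F ends)" by (auto simp: sym_def adj_def)
  hence "sym ((adj F ends)\<^sup>*)" by (rule sym_rtrancl)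
  thus "(x,y) \<in> (adj F ends)\<^sup>* \<Longrightarrow> (y,x) \<in> (adj F ends)\<^sup>*" by (auto simp: sym_def)
qed

lemma adj_insert: "adj (insert e F) ends = adj F ends \<union> {(fst (ends e), snd (ends e)), (snd (ends e), fst (ends e))}"
  by (cases "ends e") (auto simp: adj_def)

lemma closure_cong:
  assumes "(adj F ends)\<^sup>* = (adj F' ends)\<^sup>*"
  shows "(adj (insert e F) ends)\<^sup>* = (adj (insert e F') ends)\<^sup>*"
proof -
  let ?S = "{(fst (ends e), snd (ends e)), (snd (ends e), fst (ends e))}"
  have "(adj (insert e F) ends)\<^sup>* = ((adj F ends)\<^sup>* \<union> ?S\<^sup>*)\<^sup>*"
    by (simp add: adj_insert rtrancl_Un_rtrancl)
  also have "\<dots> = ((adj F' ends)\<^sup>* \<union> ?S\<^sup>*)\<^sup>*" using assms by simp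
  also have "\<dots> = (adj (insert e F') ends)\<^sup>*"
    by (simp add: adj_insert rtrancl_Un_rtrancl)
  finally show ?thesis .
qed

lemma closure_absorb:
  assumes "(fst (ends e), snd (ends e)) \<in> (adj F ends)\<^sup>*"
  shows "(adj (insert e F) ends)\<^sup>* = (adj F ends)\<^sup>*"
proof (rule rtrancl_subset)
  show "adj F ends \<subseteq> adj (insert e F) ends" by (auto simp: adj_def)
  show "adj (insert e F) ends \<subseteq> (adj F ends)\<^sup>*"
    using assms rtr_sym[OF assms] by (auto simp: adj_insert)
qed

lemma merge:
  assumes "(x,y) \<in> (R \<union> {(a,b),(b,a)})\<^sup>*"
  shows "(x,y) \<in> R\<^sup>* \<or> ((x,a) \<in> R\<^sup>* \<and> (b,y) \<in> R\<^sup>*) \<or> ((x,b) \<in> R\<^sup>* \<and> (a,y) \<in> R\<^sup>*)"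
  using assms
proof (induction rule: rtrancl_induct)
  case base then show ?case by simp
next
  case (step y z)
  from step.hyps(2) step.IH show ?case
    by (auto intro: rtrancl_into_rtrancl)
qed

definition vcomp :: "'v set \<Rightarrow> 'e set \<Rightarrow> ('e \<Rightarrow> 'v \<times> 'v) \<Rightarrow> 'v \<Rightarrow> 'v set" where
  "vcomp V F ends v = {w\<in>V. (v,w) \<in> (adj F ends)\<^sup>*}"

definition vcomps :: "'v set \<Rightarrow> 'e set \<Rightarrow> ('e \<Rightarrow> 'v \<times> 'v) \<Rightarrow> 'v set set" where
  "vcomps V F ends = vcomp V F ends ` V"

lemma comps_empty: "vcomps V {} ends = (\<lambda>v. {v}) ` V"
proof -
  have "adj {} ends = {}" by (auto simp: adj_def)
  thus ?thesis by (auto simp: vcomps_def vcomp_def image_def)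
qed

lemma comps_merge:
  assumes V: "finite V" "fst (ends e) \<in> V" "snd (ends e) \<in> V"
    and nc: "(fst (ends e), snd (ends e)) \<notin> (adj F ends)\<^sup>*"
  shows "card (vcomps V (insert e F) ends) + 1 = card (vcomps V F ends)"
proof -
  define a where "a = fst (ends e)"
  define b where "b = snd (ends e)"
  let ?R = "adj F ends"
  let ?C = "vcomp V F ends"
  let ?C' = "vcomp V (insert e F) ends"
  have R': "adj (insert e F) ends = ?R \<union> {(a,b),(b,a)}" by (simp add: adj_insert a_def b_def)
  have nab: "(a,b) \<notin> ?R\<^sup>*" using nc by (simp add: a_def b_def)
  have eqv: "(x,w) \<in> (adj (insert e F) ends)\<^sup>* \<longleftrightarrow>
     (x,w) \<in> ?R\<^sup>* \<or> ((x,a) \<in> ?R\<^sup>* \<and> (b,w) \<in> ?R\<^sup>*) \<or> ((x,b) \<in> ?R\<^sup>* \<and> (a,w) \<in> ?R\<^sup>*)" for x w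
  proof
    assume "(x,w) \<in> (adj (insert e F) ends)\<^sup>*"
    thus "(x,w) \<in> ?R\<^sup>* \<or> ((x,a) \<in> ?R\<^sup>* \<and> (b,w) \<in> ?R\<^sup>*) \<or> ((x,b) \<in> ?R\<^sup>* \<and> (a,w) \<in> ?R\<^sup>*)"
      unfolding R' by (rule merge)
  next
    have sub: "?R\<^sup>* \<subseteq> (adj (insert e F) ends)\<^sup>*" by (rule rtrancl_mono) (auto simp: R')
    have ab: "(a,b) \<in> (adj (insert e F) ends)\<^sup>*" "(b,a) \<in> (adj (insert e F) ends)\<^sup>*" by (auto simp: R')
    assume "(x,w) \<in> ?R\<^sup>* \<or> ((x,a) \<in> ?R\<^sup>* \<and> (b,w) \<in> ?R\<^sup>*) \<or> ((x,b) \<in> ?R\<^sup>* \<and> (a,w) \<in> ?R\<^sup>*)"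
    thus "(x,w) \<in> (adj (insert e F) ends)\<^sup>*"
      using sub ab by (meson rtrancl_trans subsetD)
  qed
  have trans: "(x,y) \<in> ?R\<^sup>* \<Longrightarrow> (y,z) \<in> ?R\<^sup>* \<Longrightarrow> (x,z) \<in> ?R\<^sup>*" for x y z by (rule rtrancl_trans)
  have symm: "(x,y) \<in> ?R\<^sup>* \<Longrightarrow> (y,x) \<in> ?R\<^sup>*" for x y by (rule rtr_sym)
  have Cx_a: "?C' x = ?C a \<union> ?C b" if "(a,x) \<in> ?R\<^sup>*" for x
    using that nab unfolding vcomp_def eqv by (auto dest: symm intro: trans)
  have Cx_b: "?C' x = ?C a \<union> ?C b" if "(b,x) \<in> ?R\<^sup>*" for x
    using that nab unfolding vcomp_def eqv by (auto dest: symm intro: trans)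
  have Cx_o: "?C' x = ?C x" if "(a,x) \<notin> ?R\<^sup>*" "(b,x) \<notin> ?R\<^sup>*" for x
    using that unfolding vcomp_def eqv by (auto dest: symm intro: trans)
  define U where "U = ?C a \<union> ?C b"
  define N where "N = ?C ` (V - U)"
  have aV: "a \<in> V" and bV: "b \<in> V" using V by (auto simp: a_def b_def)
  have inC: "x \<in> ?C x" if "x \<in> V" for x using that by (simp add: vcomp_def)
  have "vcomps V F ends = insert (?C a) (insert (?C b) N)"
  proof -
    have "?C ` U = {?C a, ?C b}"
    proof
      show "?C ` U \<subseteq> {?C a, ?C b}"
      proof
        fix Y assume "Y \<in> ?C ` U"
        then obtain x where x: "x \<in> U" "Y = ?C x" by auto
        have "?C x = ?C a \<or> ?C x = ?C b" using x(1) unfolding U_def vcomp_def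
          by (auto dest: symm intro: trans)
        thus "Y \<in> {?C a, ?C b}" using x by auto
      qed
      show "{?C a, ?C b} \<subseteq> ?C ` U" using inC aV bV by (auto simp: U_def)
    qed
    moreover have "U \<subseteq> V" by (auto simp: U_def vcomp_def)
    moreover have VU: "U \<union> (V - U) = V" using \<open>U \<subseteq> V\<close> by blast
    moreover have "?C ` V = ?C ` U \<union> ?C ` (V - U)" by (simp only: image_Un[symmetric] VU)
    ultimately show ?thesis unfolding vcomps_def N_def by simp
  qed
  moreover have "vcomps V (insert e F) ends = insert U N"
  proof -
    have "?C' ` U = {U}" using Cx_a Cx_b inC aV bV unfolding U_def vcomp_def by auto
    moreover have "?C' ` (V - U) = N" unfolding N_def
    proof (rule image_cong[OF refl])
      fix x assume "x \<in> V - U"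
      hence "(a,x) \<notin> ?R\<^sup>*" "(b,x) \<notin> ?R\<^sup>*" by (auto simp: U_def vcomp_def)
      thus "?C' x = ?C x" by (rule Cx_o)
    qed
    moreover have "U \<subseteq> V" by (auto simp: U_def vcomp_def)
    moreover have VU: "U \<union> (V - U) = V" using \<open>U \<subseteq> V\<close> by blast
    moreover have "?C' ` V = ?C' ` U \<union> ?C' ` (V - U)" by (simp only: image_Un[symmetric] VU)
    ultimately show ?thesis unfolding vcomps_def by simp
  qed
  moreover have "?C a \<notin> N" "?C b \<notin> N" "U \<notin> N" "?C a \<noteq> ?C b"
  proof -
    have "x \<notin> U" if "x \<in> V - U" for x using that by auto
    have nN: "Y \<notin> N" if "z \<in> Y" "z \<in> U" for Y z
      using that unfolding N_def U_def vcomp_def by (auto dest: symm intro: trans)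
    show "?C a \<notin> N" by (rule nN[of a]) (use inC aV in \<open>auto simp: U_def\<close>)
    show "?C b \<notin> N" by (rule nN[of b]) (use inC bV in \<open>auto simp: U_def\<close>)
    show "U \<notin> N" by (rule nN[of a]) (use inC aV in \<open>auto simp: U_def\<close>)
    show "?C a \<noteq> ?C b" using nab bV by (auto simp: vcomp_def)
  qed
  moreover have "finite N" using V by (simp add: N_def)
  ultimately show ?thesis by simp
qed

lemma count:
  assumes "finite F" "finite V" "\<forall>e\<in>F. fst (ends e) \<in> V \<and> snd (ends e) \<in> V"
  shows "card V \<le> card (vcomps V F ends) + card F \<and>
    (card V < card (vcomps V F ends) + card F \<longrightarrow> (\<exists>e\<in>F. (adj (F - {e}) ends)\<^sup>* = (adj F ends)\<^sup>*))"
  using assms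
proof (induction F rule: finite_induct)
  case empty
  have "card ((\<lambda>v. {v}) ` V) = card V" by (rule card_image) (auto simp: inj_on_def)
  then show ?case by (simp add: comps_empty)
next
  case (insert e F)
  have IH: "card V \<le> card (vcomps V F ends) + card F \<and>
    (card V < card (vcomps V F ends) + card F \<longrightarrow> (\<exists>e\<in>F. (adj (F - {e}) ends)\<^sup>* = (adj F ends)\<^sup>*))"
    using insert by auto
  have ci: "card (insert e F) = card F + 1" using insert by simp
  show ?case
  proof (cases "(fst (ends e), snd (ends e)) \<in> (adj F ends)\<^sup>*")
    case True
    have cl: "(adj (insert e F) ends)\<^sup>* = (adj F ends)\<^sup>*" by (rule closure_absorb[OF True])
    have "vcomps V (insert e F) ends = vcomps V F ends" by (simp add: vcomps_def vcomp_def cl)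
    moreover have "(adj (insert e F - {e}) ends)\<^sup>* = (adj (insert e F) ends)\<^sup>*"
      using cl insert(2) by simp
    ultimately show ?thesis using IH ci by auto
  next
    case False
    have m: "card (vcomps V (insert e F) ends) + 1 = card (vcomps V F ends)"
      by (rule comps_merge) (use insert False in auto)
    show ?thesis
    proof
      show "card V \<le> card (vcomps V (insert e F) ends) + card (insert e F)" using IH m ci by simp
      show "card V < card (vcomps V (insert e F) ends) + card (insert e F) \<longrightarrow>
        (\<exists>e'\<in>insert e F. (adj (insert e F - {e'}) ends)\<^sup>* = (adj (insert e F) ends)\<^sup>*)"
      proof
        assume "card V < card (vcomps V (insert e F) ends) + card (insert e F)"
        then obtain e' where e': "e' \<in> F" "(adj (F - {e'}) ends)\<^sup>* = (adj F ends)\<^sup>*"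
          using IH m ci by auto
        have "insert e F - {e'} = insert e (F - {e'})" using e' insert(2) by auto
        hence "(adj (insert e F - {e'}) ends)\<^sup>* = (adj (insert e F) ends)\<^sup>*"
          using closure_cong[OF e'(2)] by simp
        thus "\<exists>e'\<in>insert e F. (adj (insert e F - {e'}) ends)\<^sup>* = (adj (insert e F) ends)\<^sup>*"
          using e' by auto
      qed
    qed
  qed
qed

lemma conn_comps: "connected_on V F ends \<Longrightarrow> vcomps V F ends = {V}"
  unfolding connected_on_def vcomps_def vcomp_def by auto

lemma conn_card:
  assumes "finite F" "finite V" "\<forall>e\<in>F. fst (ends e) \<in> V \<and> snd (ends e) \<in> V" "connected_on V F ends"
  shows "card V \<le> 1 + card F"
  using count[OF assms(1-3)] conn_comps[OF assms(4)] by simp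

lemma conn_redundant:
  assumes "finite F" "finite V" "\<forall>e\<in>F. fst (ends e) \<in> V \<and> snd (ends e) \<in> V" "connected_on V F ends"
    "card V < 1 + card F"
  shows "\<exists>e\<in>F. connected_on V (F - {e}) ends"
proof -
  obtain e where e: "e \<in> F" "(adj (F - {e}) ends)\<^sup>* = (adj F ends)\<^sup>*"
    using count[OF assms(1-3)] conn_comps[OF assms(4)] assms(5) by auto
  have "connected_on V (F - {e}) ends" using assms(4) unfolding connected_on_def e(2) .
  thus ?thesis using e(1) by blast
qed

lemma st_card:
  assumes "wf_graph V E ends" "spanning_tree V E ends T"
  shows "card V = 1 + card T"
proof -
  have T: "T \<subseteq> E" "connected_on V T ends" "\<forall>e\<in>T. \<not> connected_on V (T - {e}) ends"
    using assms(2) by (auto simp: spanning_tree_def)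
  have f: "finite T" "finite V" "\<forall>e\<in>T. fst (ends e) \<in> V \<and> snd (ends e) \<in> V"
    using assms(1) T(1) by (auto simp: wf_graph_def intro: finite_subset)
  show ?thesis using conn_card[OF f T(2)] conn_redundant[OF f T(2)] T(3) by force
qed

lemma st_intro:
  assumes "wf_graph V E ends" "T \<subseteq> E" "connected_on V T ends" "card V = 1 + card T"
  shows "spanning_tree V E ends T"
  unfolding spanning_tree_def
proof (intro conjI assms ballI notI)
  fix e assume e: "e \<in> T" and c: "connected_on V (T - {e}) ends"
  have f: "finite (T - {e})" "finite V" "\<forall>e\<in>T-{e}. fst (ends e) \<in> V \<and> snd (ends e) \<in> V"
    using assms(1,2) by (auto simp: wf_graph_def intro: finite_subset)
  have "card V \<le> 1 + card (T - {e})" by (rule conn_card[OF f c])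
  moreover have "card (T - {e}) + 1 = card T" using e f(1)
    by (metis card_Diff1_le card.infinite card_Suc_Diff1 Suc_eq_plus1 finite_Diff2 finite.emptyI finite_insert)
  ultimately show False using assms(4) by simp
qed

lemma st_exists:
  assumes "finite F" "connected_on V F ends"
  shows "\<exists>T\<subseteq>F. connected_on V T ends \<and> (\<forall>e\<in>T. \<not> connected_on V (T - {e}) ends)"
  using assms
proof (induction "card F" arbitrary: F rule: less_induct)
  case less
  show ?case
  proof (cases "\<forall>e\<in>F. \<not> connected_on V (F - {e}) ends")
    case True then show ?thesis using less by blast
  next
    case False
    then obtain e where e: "e \<in> F" "connected_on V (F - {e}) ends" by auto
    have "card (F - {e}) < card F" by (rule card_Diff1_less[OF less.prems(1) e(1)])
    then obtain T where "T \<subseteq> F - {e}" "connected_on V T ends" "\<forall>e\<in>T. \<not> connected_on V (T - {e}) ends"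
      using less(1)[of "F - {e}"] e less(2) by auto
    thus ?thesis by blast
  qed
qed



lemma rtr_map:
  assumes "(x,y) \<in> A\<^sup>*" "\<And>x y. (x,y) \<in> A \<Longrightarrow> (h x, h y) \<in> B\<^sup>*"
  shows "(h x, h y) \<in> B\<^sup>*"
  using assms(1) by induction (auto intro: rtrancl_trans dest: assms(2))

lemma lift_conn:
  fixes VH :: "'v set" and EH :: "'e set" and endsH :: "'e \<Rightarrow> 'v \<times> 'v" and v0 :: 'v
    and VL :: "'w set" and endsL :: "'f \<Rightarrow> 'w \<times> 'w" and phi :: "'e \<Rightarrow> 'w"
  assumes phiC: "\<forall>e\<in>EH. (fst (endsH e) = v0 \<or> snd (endsH e) = v0) \<longrightarrow> phi e \<in> VL"
    and v0: "v0 \<in> VH" and B: "B \<subseteq> EH" "connected_on VH B endsH" and T: "connected_on VL T endsL"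
  shows "connected_on (glue_vertices VH v0 VL) (Inl ` B \<union> Inr ` T) (glue_ends endsH v0 endsL phi)"
proof -
  let ?R = "adj (Inl ` B \<union> Inr ` T) (glue_ends endsH v0 endsL phi)"
  obtain w0 where w0: "w0 \<in> VL" using T by (auto simp: connected_on_def)
  have i: "(Inr w0, Inr w) \<in> ?R\<^sup>*" if "w \<in> VL" for w
  proof -
    have "(w0,w) \<in> (adj T endsL)\<^sup>*" using T w0 that by (auto simp: connected_on_def)
    thus ?thesis
    proof (rule rtr_map)
      fix x y assume "(x,y) \<in> adj T endsL"
      then obtain f where f: "f \<in> T" "endsL f = (x,y) \<or> endsL f = (y,x)" by (auto simp: adj_def)
      hence "glue_ends endsH v0 endsL phi (Inr f) = (Inr x, Inr y) \<or>
             glue_ends endsH v0 endsL phi (Inr f) = (Inr y, Inr x)" by (auto simp: glue_ends_def)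
      hence "(Inr x, Inr y) \<in> ?R" using f(1) unfolding adj_def by force
      thus "(Inr x, Inr y) \<in> ?R\<^sup>*" by auto
    qed
  qed
  define lift where "lift u = (if u = v0 then Inr w0 else Inl u)" for u :: 'v
  have ii: "(lift x, lift y) \<in> ?R\<^sup>*" if "(x,y) \<in> (adj B endsH)\<^sup>*" for x y
    using that
  proof (rule rtr_map)
    fix x y assume "(x,y) \<in> adj B endsH"
    then obtain e where e: "e \<in> B" "endsH e = (x,y) \<or> endsH e = (y,x)" by (auto simp: adj_def)
    define r where "r u = (if u = v0 then Inr (phi e) else Inl u)" for u :: 'v
    have eG: "glue_ends endsH v0 endsL phi (Inl e) = (r (fst (endsH e)), r (snd (endsH e)))"
      by (simp add: glue_ends_def r_def Let_def)
    have "(r x, r y) \<in> ?R" using e eG unfolding adj_def by force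
    hence rr: "(r x, r y) \<in> ?R\<^sup>*" by auto
    have inc: "phi e \<in> VL" if "x = v0 \<or> y = v0" using phiC e B(1) that by auto
    have lx: "(lift x, r x) \<in> ?R\<^sup>*"
      using i[of "phi e"] inc by (cases "x = v0") (auto simp: lift_def r_def)
    have ly: "(lift y, r y) \<in> ?R\<^sup>*"
      using i[of "phi e"] inc by (cases "y = v0") (auto simp: lift_def r_def)
    show "(lift x, lift y) \<in> ?R\<^sup>*"
      using lx rr rtr_sym[OF ly] by (meson rtrancl_trans)
  qed
  have iii: "(Inr w0, x) \<in> ?R\<^sup>*" if "x \<in> glue_vertices VH v0 VL" for x
  proof -
    from that consider (l) u where "u \<in> VH" "u \<noteq> v0" "x = Inl u" | (r) w where "w \<in> VL" "x = Inr w"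
      unfolding glue_vertices_def by auto
    then show ?thesis
    proof cases
      case l
      have "(v0, u) \<in> (adj B endsH)\<^sup>*" using B(2) v0 l by (auto simp: connected_on_def)
      from ii[OF this] show ?thesis using l by (simp add: lift_def)
    next
      case r then show ?thesis using i by simp
    qed
  qed
  show ?thesis unfolding connected_on_def
  proof (intro conjI ballI)
    show "glue_vertices VH v0 VL \<noteq> {}" using w0 by (auto simp: glue_vertices_def)
    fix x y assume "x \<in> glue_vertices VH v0 VL" "y \<in> glue_vertices VH v0 VL"
    thus "(x, y) \<in> ?R\<^sup>*" using iii rtr_sym by (meson rtrancl_trans)
  qed
qed

lemma proj_conn:
  fixes VH :: "'v set" and endsH :: "'e \<Rightarrow> 'v \<times> 'v" and v0 :: 'v
    and VL :: "'w set" and endsL :: "'f \<Rightarrow> 'w \<times> 'w" and phi :: "'e \<Rightarrow> 'w"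
  assumes v0: "v0 \<in> VH" and VL: "VL \<noteq> {}"
    and C: "connected_on (glue_vertices VH v0 VL) B (glue_ends endsH v0 endsL phi)"
  shows "connected_on VH {e. Inl e \<in> B} endsH"
proof -
  let ?R = "adj B (glue_ends endsH v0 endsL phi)"
  let ?S = "adj {e. Inl e \<in> B} endsH"
  define proj where "proj x = (case x of Inl u \<Rightarrow> u | Inr w \<Rightarrow> v0)" for x :: "'v + 'w"
  have step: "(proj x, proj y) \<in> ?S\<^sup>*" if xy: "(x,y) \<in> ?R" for x y
  proof -
    obtain g where g: "g \<in> B" "glue_ends endsH v0 endsL phi g = (x,y) \<or> glue_ends endsH v0 endsL phi g = (y,x)"
      using xy unfolding adj_def by blast
    show ?thesis
    proof (cases g)
      case (Inl e)
      define r where "r u = (if u = v0 then Inr (phi e) else Inl u)" for u :: 'v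
      have eG: "glue_ends endsH v0 endsL phi (Inl e) = (r (fst (endsH e)), r (snd (endsH e)))"
        by (simp add: glue_ends_def r_def Let_def)
      have pr: "proj (r u) = u" for u by (simp add: proj_def r_def)
      have "endsH e = (proj x, proj y) \<or> endsH e = (proj y, proj x)"
        using g(2) eG pr unfolding Inl by (cases "endsH e") auto
      hence "(proj x, proj y) \<in> ?S" using g(1) Inl unfolding adj_def by force
      thus ?thesis by auto
    next
      case (Inr f)
      hence "proj x = proj y" using g(2) by (auto simp: glue_ends_def proj_def)
      thus ?thesis by simp
    qed
  qed
  obtain w0 where w0: "w0 \<in> VL" using VL by auto
  define lift where "lift u = (if u = v0 then Inr w0 else Inl u)" for u :: 'v
  have lV: "lift u \<in> glue_vertices VH v0 VL" if "u \<in> VH" for u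
    using that w0 by (auto simp: lift_def glue_vertices_def)
  have pl: "proj (lift u) = u" for u by (simp add: proj_def lift_def)
  show ?thesis unfolding connected_on_def
  proof (intro conjI ballI)
    show "VH \<noteq> {}" using v0 by auto
    fix u w assume "u \<in> VH" "w \<in> VH"
    hence "(lift u, lift w) \<in> ?R\<^sup>*" using C lV by (auto simp: connected_on_def)
    from rtr_map[where h=proj, OF this step] show "(u, w) \<in> ?S\<^sup>*" by (simp add: pl)
  qed
qed

lemma card_sum: "finite A \<Longrightarrow> finite B \<Longrightarrow> card (Inl ` A \<union> Inr ` B) = card A + card B"
  by (subst card_Un_disjoint) (auto simp: card_image)

lemma card_VG: "finite VH \<Longrightarrow> v0 \<in> VH \<Longrightarrow> finite VL \<Longrightarrow>
  card (glue_vertices VH v0 VL) + 1 = card VH + card VL"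
  unfolding glue_vertices_def
  by (simp add: card_sum) (metis Suc_pred card_gt_0_iff empty_iff add_Suc)

lemma wf_G:
  assumes "wf_graph VH EH endsH" "wf_graph VL EL endsL" "v0 \<in> VH"
    "\<forall>e\<in>EH. (fst (endsH e) = v0 \<or> snd (endsH e) = v0) \<longrightarrow> phi e \<in> VL"
  shows "wf_graph (glue_vertices VH v0 VL) (glue_edges EH EL) (glue_ends endsH v0 endsL phi)"
  using assms unfolding wf_graph_def glue_vertices_def glue_edges_def
  by (auto simp: glue_ends_def Let_def)

lemma symdiff_card: "finite A \<Longrightarrow> finite B \<Longrightarrow>
  card ((A - B) \<union> (B - A)) + 2 * card (A \<inter> B) = card A + card B"
proof -
  assume f: "finite A" "finite B"
  have "card ((A - B) \<union> (B - A)) = card (A - B) + card (B - A)"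
    using f by (intro card_Un_disjoint) auto
  moreover have "card (A - B) + card (A \<inter> B) = card A" using f
    by (metis card_Un_disjoint Diff_disjoint Int_Diff_disjoint Un_Diff_Int finite_Diff finite_Int inf_commute)
  moreover have "card (B - A) + card (A \<inter> B) = card B" using f
    by (metis card_Un_disjoint Int_Diff_disjoint Un_Diff_Int finite_Diff finite_Int inf_commute)
  ultimately show ?thesis by simp
qed

lemma bd_ge: "finite S \<Longrightarrow> B \<in> S \<Longrightarrow> B' \<in> S \<Longrightarrow> card ((B - B') \<union> (B' - B)) \<le> bdiam S"
  unfolding bdiam_def
proof (rule Max_ge)
  assume "finite S"
  have "{card ((B - B') \<union> (B' - B)) | B B'. B \<in> S \<and> B' \<in> S} = (\<lambda>(B,B'). card ((B - B') \<union> (B' - B))) ` (S \<times> S)"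
    by auto
  thus "finite {card ((B - B') \<union> (B' - B)) | B B'. B \<in> S \<and> B' \<in> S}" using \<open>finite S\<close> by simp
qed auto

lemma bd_in: "finite S \<Longrightarrow> S \<noteq> {} \<Longrightarrow> \<exists>B\<in>S. \<exists>B'\<in>S. bdiam S = card ((B - B') \<union> (B' - B))"
proof -
  assume "finite S" "S \<noteq> {}"
  have eq: "{card ((B - B') \<union> (B' - B)) | B B'. B \<in> S \<and> B' \<in> S} = (\<lambda>(B,B'). card ((B - B') \<union> (B' - B))) ` (S \<times> S)"
    by auto
  have "Max ((\<lambda>(B,B'). card ((B - B') \<union> (B' - B))) ` (S \<times> S)) \<in> (\<lambda>(B,B'). card ((B - B') \<union> (B' - B))) ` (S \<times> S)"
    using \<open>finite S\<close> \<open>S \<noteq> {}\<close> by (intro Max_in) auto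
  thus ?thesis unfolding bdiam_def eq by auto
qed



theorem proposition6p5:
  fixes VH :: "'v set" and EH :: "'e set" and endsH :: "'e \<Rightarrow> 'v \<times> 'v" and v0 :: 'v
    and VL :: "'w set" and EL :: "'f set" and endsL :: "'f \<Rightarrow> 'w \<times> 'w"
    and phi :: "'e \<Rightarrow> 'w"
  assumes H: "wf_graph VH EH endsH" "connected_on VH EH endsH" "loopless EH endsH" "v0 \<in> VH"
    and L: "wf_graph VL EL endsL" "connected_on VL EL endsL"
    and degL: "card VL \<ge> degree EH endsH v0"
    and phi: "\<forall>e\<in>EH. (fst (endsH e) = v0 \<or> snd (endsH e) = v0) \<longrightarrow> phi e \<in> VL"
      "inj_on phi {e\<in>EH. fst (endsH e) = v0 \<or> snd (endsH e) = v0}"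
    and two_trees: "\<exists>T1 T2. T1 \<in> graphic_bases VL EL endsL \<and> T2 \<in> graphic_bases VL EL endsL
                       \<and> T1 \<inter> T2 = {}"
  shows "borsuk (graphic_bases (glue_vertices VH v0 VL) (glue_edges EH EL) (glue_ends endsH v0 endsL phi))
         \<le> borsuk (graphic_bases VH EH endsH)"
proof -
  define VG where "VG = glue_vertices VH v0 VL"
  define EG where "EG = glue_edges EH EL"
  define eG where "eG = glue_ends endsH v0 endsL phi"
  define BH where "BH = graphic_bases VH EH endsH"
  define BG where "BG = graphic_bases VG EG eG"
  have wfG: "wf_graph VG EG eG" unfolding VG_def EG_def eG_def
    by (rule wf_G[OF H(1) L(1) H(4) phi(1)])
  have fin: "finite VH" "finite EH" "finite VL" "finite EL" "finite EG"
    using H(1) L(1) wfG by (auto simp: wf_graph_def)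
  obtain T1 T2 where T: "spanning_tree VL EL endsL T1" "spanning_tree VL EL endsL T2" "T1 \<inter> T2 = {}"
    using two_trees by (auto simp: graphic_bases_def)
  have cT: "card VL = 1 + card T1" "card VL = 1 + card T2"
    using st_card[OF L(1) T(1)] st_card[OF L(1) T(2)] by auto
  have Tsub: "T1 \<subseteq> EL" "T2 \<subseteq> EL" and Tconn: "connected_on VL T1 endsL" "connected_on VL T2 endsL"
    using T by (auto simp: spanning_tree_def)
  have finT: "finite T1" "finite T2" using Tsub fin by (auto intro: finite_subset)
  have cH: "card VH = 1 + card B" if "B \<in> BH" for B
    using st_card[OF H(1)] that by (auto simp: BH_def graphic_bases_def)
  have cG: "card VG = 1 + card B" if "B \<in> BG" for B
    using st_card[OF wfG] that by (auto simp: BG_def graphic_bases_def)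
  have cVG: "card VG + 1 = card VH + card VL"
    unfolding VG_def by (rule card_VG) (use fin H(4) in auto)
  have subH: "B \<subseteq> EH" if "B \<in> BH" for B using that by (auto simp: BH_def graphic_bases_def spanning_tree_def)
  have subG: "B \<subseteq> EG" if "B \<in> BG" for B using that by (auto simp: BG_def graphic_bases_def spanning_tree_def)
  have finBH: "finite BH"
    by (rule finite_subset[of _ "Pow EH"]) (use subH fin in auto)
  have finBG: "finite BG"
    by (rule finite_subset[of _ "Pow EG"]) (use subG fin in auto)
  have ext: "Inl ` B \<union> Inr ` T \<in> BG" if B: "B \<in> BH" and TT: "T = T1 \<or> T = T2" for B T
  proof -
    have Bc: "connected_on VH B endsH" using B by (auto simp: BH_def graphic_bases_def spanning_tree_def)
    have Tc: "connected_on VL T endsL" "T \<subseteq> EL" "finite T" using TT Tconn Tsub finT by auto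
    have "spanning_tree VG EG eG (Inl ` B \<union> Inr ` T)"
    proof (rule st_intro[OF wfG])
      show "Inl ` B \<union> Inr ` T \<subseteq> EG" using subH[OF B] Tc(2) by (auto simp: EG_def glue_edges_def)
      show "connected_on VG (Inl ` B \<union> Inr ` T) eG" unfolding VG_def eG_def
        by (rule lift_conn[OF phi(1) H(4) subH[OF B] Bc Tc(1)])
      have "card (Inl ` B \<union> Inr ` T) = card B + card T"
        by (rule card_sum) (use subH[OF B] fin Tc(3) in \<open>auto intro: finite_subset\<close>)
      thus "card VG = 1 + card (Inl ` B \<union> Inr ` T)" using cVG cH[OF B] cT TT by auto
    qed
    thus ?thesis by (simp add: BG_def graphic_bases_def)
  qed
  have proj: "\<exists>B'\<in>BH. Inl ` B' \<subseteq> B" if B: "B \<in> BG" for B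
  proof -
    have cn: "connected_on VH {e. Inl e \<in> B} endsH"
    proof (rule proj_conn[where VL=VL and endsL=endsL and phi=phi, OF H(4)])
      show "VL \<noteq> {}" using L(2) by (simp add: connected_on_def)
      show "connected_on (glue_vertices VH v0 VL) B (glue_ends endsH v0 endsL phi)"
        using B by (simp add: BG_def graphic_bases_def spanning_tree_def VG_def eG_def)
    qed
    have sub: "{e. Inl e \<in> B} \<subseteq> EH" using subG[OF B] by (auto simp: EG_def glue_edges_def)
    have fs: "finite {e. Inl e \<in> B}" using sub fin by (auto intro: finite_subset)
    obtain T where T: "T \<subseteq> {e. Inl e \<in> B}" "connected_on VH T endsH"
      "\<forall>e\<in>T. \<not> connected_on VH (T - {e}) endsH"
      using st_exists[OF fs cn] by blast
    have "T \<subseteq> EH" using T(1) sub by auto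
    hence "T \<in> BH" using T(2,3) by (simp add: BH_def graphic_bases_def spanning_tree_def)
    moreover have "Inl ` T \<subseteq> B" using T(1) by auto
    ultimately show ?thesis by blast
  qed
  define pr where "pr B = (SOME B'. B' \<in> BH \<and> Inl ` B' \<subseteq> B)" for B :: "('e + 'f) set"
  have prP: "pr B \<in> BH \<and> Inl ` (pr B) \<subseteq> B" if "B \<in> BG" for B
    unfolding pr_def using proj[OF that] by (metis (mono_tags, lifting) someI_ex)
  have BHne: "BH \<noteq> {}"
  proof -
    obtain T where "T \<subseteq> EH" "connected_on VH T endsH" "\<forall>e\<in>T. \<not> connected_on VH (T - {e}) endsH"
      using st_exists[OF fin(2) H(2)] by blast
    thus ?thesis by (auto simp: BH_def graphic_bases_def spanning_tree_def)
  qed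
  have main: "borsuk BG \<le> borsuk BH"
  proof (cases "card BH = 1")
    case True then show ?thesis by (simp add: borsuk_def)
  next
    case False
    obtain B1 where B1: "B1 \<in> BH" using BHne by auto
    obtain B2 where B2: "B2 \<in> BH" "B2 \<noteq> B1"
    proof -
      have "BH \<noteq> {B1}" using False by auto
      thus ?thesis using B1 that by blast
    qed
    have dpos: "0 < bdiam BH"
    proof -
      have "(B1 - B2) \<union> (B2 - B1) \<noteq> {}" using B2 by auto
      moreover have "finite ((B1 - B2) \<union> (B2 - B1))" using subH B1 B2 fin by (auto intro: finite_subset)
      ultimately have "0 < card ((B1 - B2) \<union> (B2 - B1))" by auto
      also have "\<dots> \<le> bdiam BH" by (rule bd_ge[OF finBH B1 B2(1)])
      finally show ?thesis .
    qed
    have G1: "card BG \<noteq> 1"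
    proof
      assume "card BG = 1"
      then obtain x where "BG = {x}" by (rule card_1_singletonE)
      moreover have "Inl ` B1 \<union> Inr ` T1 \<in> BG" "Inl ` B2 \<union> Inr ` T1 \<in> BG" using ext B1 B2 by auto
      ultimately have "Inl ` B1 \<union> Inr ` T1 = Inl ` B2 \<union> Inr ` T1" by auto
      hence "B1 = B2" by blast
      thus False using B2 by simp
    qed
    have dG: "bdiam BH + card T1 + card T2 \<le> bdiam BG"
    proof -
      obtain C1 C2 where C: "C1 \<in> BH" "C2 \<in> BH" "bdiam BH = card ((C1 - C2) \<union> (C2 - C1))"
        using bd_in[OF finBH BHne] by auto
      define Y1 where "Y1 = Inl ` C1 \<union> Inr ` T1"
      define Y2 where "Y2 = Inl ` C2 \<union> Inr ` T2"
      have Y: "Y1 \<in> BG" "Y2 \<in> BG" using ext C by (auto simp: Y1_def Y2_def)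
      have "(Y1 - Y2) \<union> (Y2 - Y1) = Inl ` ((C1 - C2) \<union> (C2 - C1)) \<union> Inr ` (T1 \<union> T2)"
        using T(3) by (auto simp: Y1_def Y2_def)
      moreover have "card (Inl ` ((C1 - C2) \<union> (C2 - C1)) \<union> Inr ` (T1 \<union> T2)) =
          card ((C1 - C2) \<union> (C2 - C1)) + card (T1 \<union> T2)"
        by (rule card_sum) (use subH C fin finT in \<open>auto intro: finite_subset\<close>)
      moreover have "card (T1 \<union> T2) = card T1 + card T2" using finT T(3) by (simp add: card_Un_disjoint)
      ultimately have "card ((Y1 - Y2) \<union> (Y2 - Y1)) = bdiam BH + card T1 + card T2" using C by simp
      thus ?thesis using bd_ge[OF finBG Y] by simp
    qed
    define Pr where "Pr k = (\<exists>P. is_partition P BH \<and> card P = k \<and> (\<forall>X\<in>P. bdiam X < bdiam BH))" for k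
    have exP: "Pr (card ((\<lambda>B. {B}) ` BH))" unfolding Pr_def
    proof (intro exI conjI)
      show "is_partition ((\<lambda>B. {B}) ` BH) BH" by (auto simp: is_partition_def)
      show "\<forall>X\<in>(\<lambda>B. {B}) ` BH. bdiam X < bdiam BH" using dpos by (auto simp: bdiam_def)
    qed simp
    obtain P where P: "is_partition P BH" "card P = (LEAST k. Pr k)" "\<forall>X\<in>P. bdiam X < bdiam BH"
      using LeastI[of Pr, OF exP] unfolding Pr_def by blast
    have finP: "finite P" using P(1) finBH by (auto simp: is_partition_def intro: finite_UnionD)
    define Q where "Q = (\<lambda>X. {B\<in>BG. pr B \<in> X}) ` P - {{}}"
    have Qpart: "is_partition Q BG" unfolding is_partition_def
    proof (intro conjI ballI impI)
      show "\<Union> Q = BG"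
      proof
        show "\<Union> Q \<subseteq> BG" by (auto simp: Q_def)
        show "BG \<subseteq> \<Union> Q"
        proof
          fix B assume B: "B \<in> BG"
          then obtain X where "X \<in> P" "pr B \<in> X" using prP[OF B] P(1) by (auto simp: is_partition_def)
          thus "B \<in> \<Union> Q" using B unfolding Q_def by blast
        qed
      qed
      show "{} \<notin> Q" by (simp add: Q_def)
      fix Y1 Y2 assume Y: "Y1 \<in> Q" "Y2 \<in> Q" "Y1 \<noteq> Y2"
      then obtain X1 X2 where X: "X1 \<in> P" "X2 \<in> P" "Y1 = {B\<in>BG. pr B \<in> X1}" "Y2 = {B\<in>BG. pr B \<in> X2}"
        by (auto simp: Q_def)
      hence "X1 \<noteq> X2" using Y by auto
      hence "X1 \<inter> X2 = {}" using P(1) X by (auto simp: is_partition_def)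
      thus "Y1 \<inter> Y2 = {}" using X by auto
    qed
    have cQ: "card Q \<le> card P"
    proof -
      have "card Q \<le> card ((\<lambda>X. {B\<in>BG. pr B \<in> X}) ` P)" unfolding Q_def by (rule card_Diff1_le)
      also have "\<dots> \<le> card P" by (rule card_image_le[OF finP])
      finally show ?thesis .
    qed
    have Qd: "\<forall>Y\<in>Q. bdiam Y < bdiam BG"
    proof
      fix Y assume "Y \<in> Q"
      then obtain X where X: "X \<in> P" "Y = {B\<in>BG. pr B \<in> X}" "Y \<noteq> {}" by (auto simp: Q_def)
      have finY: "finite Y" using X(2) finBG by auto
      obtain B B' where BB: "B \<in> Y" "B' \<in> Y" "bdiam Y = card ((B - B') \<union> (B' - B))"
        using bd_in[OF finY X(3)] by auto
      have BG': "B \<in> BG" "B' \<in> BG" "pr B \<in> X" "pr B' \<in> X" using BB X(2) by auto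
      have XH: "X \<subseteq> BH" using X(1) P(1) by (auto simp: is_partition_def)
      have finX: "finite X" using XH finBH by (auto intro: finite_subset)
      have "card ((pr B - pr B') \<union> (pr B' - pr B)) \<le> bdiam X" by (rule bd_ge[OF finX BG'(3,4)])
      hence lt: "card ((pr B - pr B') \<union> (pr B' - pr B)) < bdiam BH" using P(3) X(1) by fastforce
      have fB: "finite B" "finite B'" using subG BG' fin by (auto intro: finite_subset)
      have fpB: "finite (pr B)" "finite (pr B')" using subH XH BG' fin by (auto intro: finite_subset)
      have sd1: "card ((B - B') \<union> (B' - B)) + 2 * card (B \<inter> B') = card B + card B'"
        by (rule symdiff_card[OF fB])
      have sd2: "card ((pr B - pr B') \<union> (pr B' - pr B)) + 2 * card (pr B \<inter> pr B') = card (pr B) + card (pr B')"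
        by (rule symdiff_card[OF fpB])
      have "card (pr B \<inter> pr B') = card (Inl ` (pr B \<inter> pr B') :: ('e + 'f) set)"
        by (rule card_image[symmetric]) (auto simp: inj_on_def)
      also have "\<dots> \<le> card (B \<inter> B')"
        by (rule card_mono) (use fB prP[OF BG'(1)] prP[OF BG'(2)] in auto)
      finally have ci: "card (pr B \<inter> pr B') \<le> card (B \<inter> B')" .
      have c1: "card VG = 1 + card B" "card VG = 1 + card B'" using cG[OF BG'(1)] cG[OF BG'(2)] by auto
      have c2: "card VH = 1 + card (pr B)" "card VH = 1 + card (pr B')" using cH[of "pr B"] cH[of "pr B'"] XH BG' by auto
      show "bdiam Y < bdiam BG" using BB(3) sd1 sd2 ci c1 c2 cVG cT dG lt by linarith
    qed
    have "borsuk BG = enat (LEAST k. \<exists>P. is_partition P BG \<and> card P = k \<and> (\<forall>X\<in>P. bdiam X < bdiam BG))"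
      using G1 by (simp add: borsuk_def)
    also have "\<dots> \<le> enat (card Q)"
      using Qpart Qd by (auto intro!: Least_le)
    also have "\<dots> \<le> enat (LEAST k. Pr k)" using cQ P(2) by simp
    also have "\<dots> = borsuk BH" using False by (simp add: borsuk_def Pr_def)
    finally show ?thesis .
  qed
  thus ?thesis by (simp add: BG_def BH_def VG_def EG_def eG_def)
qed

end
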